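(* Let $p,q\in\mathbb{R}$ with $q<0$ and $p<0$, and let $D=\frac{p^3}{27}+\frac{q^2}{4}$. Let $x_1,x_2,x_3\in\mathbb{C}$ be the solutions of $x^3+px+q=0$. Then: (1) if $D\ge0$, $|x_i|\le\frac83+\frac13|q|+\frac1{12}q^2+\frac1{81}p^3$ for each $i$; (2) if $D<0$, $|x_i|\le 3+\frac16q^2+\frac1{81}|p|^3$ for each $i$.
   Context: The solutions are those given by Cardano's formula: $x_1=z_1+z_2$, $x_2=z_1+\lambda z_2$, $x_3=z_1+\lambda^2z_2$, with $z_1=\sqrt[3]{-\frac q2+\sqrt{D}}$, $z_2=\sqrt[3]{-\frac q2-\sqrt{D}}$ and $\lambda^3=1$. *)

theory Defs
  imports Complex_Main
begin

end

theory Submission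
  imports Defs
begin

lemma cube_bound:
  fixes r a :: real
  assumes "r \<ge> 0" "a \<ge> 0" "r ^ 3 \<le> 3 * a^2 * r + 2 * a^3"
  shows "r \<le> 2 * a"
proof (rule ccontr)
  assume "\<not> r \<le> 2 * a"
  hence "r - 2*a > 0" by simp
  moreover have "(r + a)^2 > 0" using assms \<open>r - 2*a > 0\<close> by (smt (verit) zero_less_power)
  ultimately have "(r - 2*a) * (r + a)^2 > 0" by simp
  moreover have "(r - 2*a) * (r + a)^2 = r^3 - 3*a^2*r - 2*a^3" by (simp add: power2_eq_square power3_eq_cube algebra_simps)
  ultimately show False using assms by linarith
qed

lemma root_bound:
  fixes x :: complex and p q :: real
  assumes "x ^ 3 + of_real p * x + of_real q = 0"
  shows "cmod x ^ 3 \<le> \<bar>p\<bar> * cmod x + \<bar>q\<bar>"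
proof -
  have "x ^ 3 = - (of_real p * x + of_real q)" using assms by (metis add.assoc eq_neg_iff_add_eq_0)
  hence "cmod x ^ 3 = cmod (of_real p * x + of_real q)" by (metis norm_power norm_minus_cancel)
  also have "\<dots> \<le> cmod (of_real p * x) + cmod (of_real q)" by (rule norm_triangle_ineq)
  also have "\<dots> = \<bar>p\<bar> * cmod x + \<bar>q\<bar>" by (simp add: norm_mult)
  finally show ?thesis .
qed

theorem mainTheorem10:
  fixes p q :: real and D :: real
  assumes "q < 0" and "p < 0"
    and "D = p ^ 3 / 27 + q ^ 2 / 4"
  shows "(D \<ge> 0 \<longrightarrow> (\<forall>x::complex. x ^ 3 + of_real p * x + of_real q = 0 \<longrightarrow>
            cmod x \<le> 8/3 + \<bar>q\<bar> / 3 + q ^ 2 / 12 + p ^ 3 / 81))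
       \<and> (D < 0 \<longrightarrow> (\<forall>x::complex. x ^ 3 + of_real p * x + of_real q = 0 \<longrightarrow>
            cmod x \<le> 3 + q ^ 2 / 6 + \<bar>p\<bar> ^ 3 / 81))"
proof (intro conjI impI allI)
  fix x :: complex
  assume D: "D \<ge> 0" and x: "x ^ 3 + of_real p * x + of_real q = 0"
  define P Q where "P = -p" and "Q = -q"
  have P: "P > 0" and Q: "Q > 0" using assms by (auto simp: P_def Q_def)
  define a where "a = root 3 (Q/2)"
  have a0: "a > 0" using Q by (simp add: a_def)
  have Qa: "Q = 2 * a^3" using Q by (simp add: a_def odd_real_root_pow)
  have "P^3 \<le> 27 * Q^2 / 4" using D assms(3) by (simp add: P_def Q_def)
  also have "\<dots> = (3*a^2)^3" by (simp add: Qa power_mult_distrib flip: power_mult)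
  finally have P3: "P^3 \<le> (3*a^2)^3" .
  have "P \<le> 3*a^2"
  proof (rule ccontr)
    assume "\<not> P \<le> 3*a^2"
    hence "(3*a^2)^3 < P^3" by (intro power_strict_mono) (use a0 in auto)
    thus False using P3 by linarith
  qed
  have r: "cmod x ^ 3 \<le> P * cmod x + Q" using root_bound[OF x] assms by (simp add: P_def Q_def)
  also have "\<dots> \<le> 3*a^2 * cmod x + 2*a^3" using \<open>P \<le> 3*a^2\<close> Qa by (simp add: mult_right_mono)
  finally have "cmod x \<le> 2*a" using cube_bound a0 by auto
  also have "2*a \<le> 8/3 + 2*a^3/3"
  proof -
    have "0 \<le> (a-1)^2*(a+2) + 2" using a0 by simp
    moreover have "(a-1)^2*(a+2) + 2 = a^3 - 3*a + 4" by (simp add: power2_eq_square power3_eq_cube algebra_simps)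
    ultimately show ?thesis by linarith
  qed
  also have "\<dots> \<le> 8/3 + \<bar>q\<bar> / 3 + q ^ 2 / 12 + p ^ 3 / 81"
    using Qa assms D by (simp add: Q_def)
  finally show "cmod x \<le> 8/3 + \<bar>q\<bar> / 3 + q ^ 2 / 12 + p ^ 3 / 81" .
next
  fix x :: complex
  assume D: "D < 0" and x: "x ^ 3 + of_real p * x + of_real q = 0"
  define P Q where "P = -p" and "Q = -q"
  have P: "P > 0" and Q: "Q > 0" using assms by (auto simp: P_def Q_def)
  define s where "s = sqrt (P/3)"
  have s0: "s > 0" using P by (simp add: s_def)
  have Ps: "P = 3 * s^2" using P by (simp add: s_def)
  have "Q^2 < 4 * P^3 / 27" using D assms(3) by (simp add: P_def Q_def)
  also have "\<dots> = (2*s^3)^2" by (simp add: Ps power_mult_distrib flip: power_mult)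
  finally have Q2: "Q^2 < (2*s^3)^2" .
  have "Q < 2*s^3"
  proof (rule ccontr)
    assume "\<not> Q < 2*s^3"
    hence "(2*s^3)^2 \<le> Q^2" by (intro power_mono) (use s0 in auto)
    thus False using Q2 by linarith
  qed
  have "cmod x ^ 3 \<le> P * cmod x + Q" using root_bound[OF x] assms by (simp add: P_def Q_def)
  also have "\<dots> \<le> 3*s^2 * cmod x + 2*s^3" using \<open>Q < 2*s^3\<close> Ps by simp
  finally have "cmod x \<le> 2*s" using cube_bound s0 by auto
  also have "2*s \<le> 3 + s^6/3"
  proof (cases "s \<le> 3/2")
    case True then show ?thesis by (simp add: add_increasing2)
  next
    case False
    hence "s^5 \<ge> (3/2)^5" by (intro power_mono) auto
    moreover have "(3/2::real)^5 = 243/32" by (simp add: power_divide)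
    ultimately have "s^5 \<ge> 6" by linarith
    hence "s * s^5 \<ge> s * 6" using s0 by (simp add: mult_left_mono)
    thus ?thesis by (simp add: power_Suc[symmetric] del: power_Suc)
  qed
  also have "\<dots> \<le> 3 + q ^ 2 / 6 + \<bar>p\<bar> ^ 3 / 81"
  proof -
    have "\<bar>p\<bar>^3 = 27 * s^6" using assms by (simp add: P_def[symmetric] Ps power_mult_distrib flip: power_mult)
    thus ?thesis by simp
  qed
  finally show "cmod x \<le> 3 + q ^ 2 / 6 + \<bar>p\<bar> ^ 3 / 81" .
qed

end
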